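(* Let $g\in\mathbb{Q}\setminus\{-1,0,1\}$ and $m=p_1^{e_1}\cdots p_r^{e_r}$. The set of integers $u\in S(g)$ with $\gcd(u,m)=1$ and $p_j^{e_j}\nmid\mathrm{ord}_g(u)$ for $1\le j\le r$ is completely multiplicative, i.e. for all natural numbers $x,y$: $xy$ lies in the set if and only if both $x$ and $y$ do.
   Context: $S(g)$ is the set of natural numbers all of whose prime factors $p$ satisfy $\nu_p(g)=0$; for $u\in S(g)$, $\mathrm{ord}_g(u)$ is the multiplicative order of $g$ modulo $u$. *)

theory Defs
  imports "HOL-Number_Theory.Number_Theory"
begin

definition padic_val_rat :: "nat \<Rightarrow> rat \<Rightarrow> int" where
  "padic_val_rat p g = (case quotient_of g of (a, b) \<Rightarrow>
     int (multiplicity (int p) a) - int (multiplicity (int p) b))"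

definition Sg :: "rat \<Rightarrow> nat set" where
  "Sg g = {u. u > 0 \<and> (\<forall>p. prime p \<and> p dvd u \<longrightarrow> padic_val_rat p g = 0)}"

text \<open>Multiplicative order of g = a/b modulo u: least k > 0 with g^k = 1 mod u,
  i.e. a^k = b^k (mod u) (b is invertible mod u for u in S(g)).\<close>
definition ord_rat :: "rat \<Rightarrow> nat \<Rightarrow> nat" where
  "ord_rat g u = (case quotient_of g of (a, b) \<Rightarrow>
     (LEAST k. k > 0 \<and> [a ^ k = b ^ k] (mod int u)))"

definition good_set :: "rat \<Rightarrow> nat \<Rightarrow> nat set" where
  "good_set g m = {u \<in> Sg g. coprime u m \<and>
     (\<forall>p \<in> prime_factors m. \<not> p ^ multiplicity p m dvd ord_rat g u)}"

end

theory Submission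
  imports Defs
begin

lemma ordD:
  fixes a b :: int and u :: nat
  defines "d \<equiv> (LEAST k. k > 0 \<and> [a ^ k = b ^ k] (mod int u))"
  assumes ex: "k0 > 0" "[a ^ k0 = b ^ k0] (mod int u)" and cop: "coprime b (int u)"
  shows "d > 0 \<and> [a ^ d = b ^ d] (mod int u) \<and>
         (\<forall>k. [a ^ k = b ^ k] (mod int u) \<longleftrightarrow> d dvd k)"
proof -
  have P: "d > 0 \<and> [a ^ d = b ^ d] (mod int u)"
    unfolding d_def by (rule LeastI[of _ k0]) (use ex in auto)
  have dv: "[a ^ k = b ^ k] (mod int u) \<longleftrightarrow> d dvd k" for k
  proof
    assume "d dvd k"
    then obtain q where "k = d * q" by auto
    then show "[a ^ k = b ^ k] (mod int u)"
      using cong_pow[OF conjunct2[OF P], of q] by (simp add: power_mult)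
  next
    assume h: "[a ^ k = b ^ k] (mod int u)"
    define q r where "q = k div d" and "r = k mod d"
    have k: "k = r + d * q" by (simp add: q_def r_def)
    have c1: "[(a ^ d) ^ q = (b ^ d) ^ q] (mod int u)"
      using cong_pow[OF conjunct2[OF P]] by blast
    have "[a ^ r * (a ^ d) ^ q = a ^ r * (b ^ d) ^ q] (mod int u)"
      using cong_scalar_left[OF c1] by blast
    moreover have "a ^ k = a ^ r * (a ^ d) ^ q" "b ^ k = b ^ r * (b ^ d) ^ q"
      using k by (simp_all add: power_add power_mult)
    ultimately have "[a ^ r * (b ^ d) ^ q = b ^ r * (b ^ d) ^ q] (mod int u)"
      using h by (metis cong_sym cong_trans)
    moreover have "coprime ((b ^ d) ^ q) (int u)" using cop by simp
    ultimately have hr: "[a ^ r = b ^ r] (mod int u)" using cong_mult_rcancel by blast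
    have "r < d" using P by (simp add: r_def)
    hence "\<not> (r > 0 \<and> [a ^ r = b ^ r] (mod int u))"
      unfolding d_def using not_less_Least by blast
    with hr have "r = 0" by auto
    thus "d dvd k" by (metis dvd_eq_mod_eq_0 r_def)
  qed
  show ?thesis using P dv by blast
qed

lemma pow_gcd_cong:
  fixes A B l :: int and g :: nat
  assumes "[A = B] (mod l)" "int g dvd l"
  shows "[A ^ g = B ^ g] (mod l * int g)"
proof -
  define S where "S = (\<Sum>i<g. B ^ (g - Suc i) * A ^ i)"
  have eq: "A ^ g - B ^ g = (A - B) * S" unfolding S_def by (rule power_diff_sumr2)
  have "[S = (\<Sum>i<g. B ^ (g - Suc i) * B ^ i)] (mod l)"
    unfolding S_def by (intro cong_sum cong_mult cong_refl cong_pow) (use assms in auto)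
  moreover have "(\<Sum>i<g. B ^ (g - Suc i) * B ^ i) = (\<Sum>i<g. B ^ (g - 1))"
    by (intro sum.cong refl) (simp flip: power_add)
  ultimately have "[S = int g * B ^ (g - 1)] (mod l)" by simp
  hence "[S = int g * B ^ (g - 1)] (mod int g)" using assms(2) cong_dvd_modulus by blast
  hence "int g dvd S" by (simp add: cong_iff_dvd_diff dvd_diff_commute)
    (metis cong_dvd_iff cong_iff_dvd_diff dvd_triv_left)
  moreover have "l dvd A - B" using assms(1) by (simp add: cong_iff_dvd_diff)
  ultimately have "l * int g dvd (A - B) * S" by (simp add: mult_dvd_mono)
  thus ?thesis using eq by (simp add: cong_iff_dvd_diff)
qed

lemma lcm_pp:
  fixes p e A B :: nat
  assumes "prime p" "A > 0" "B > 0" "p ^ e dvd lcm A B"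
  shows "p ^ e dvd A \<or> p ^ e dvd B"
proof (rule ccontr)
  assume "\<not> ?thesis"
  moreover have "p \<noteq> Suc 0" using assms(1) by auto
  ultimately have "multiplicity p A < e" "multiplicity p B < e"
    using multiplicity_lessI[of A p e] multiplicity_lessI[of B p e] assms by auto
  moreover have "lcm A B \<noteq> 0" using assms by simp
  hence "e \<le> multiplicity p (lcm A B)"
    using assms(4) multiplicity_geI[of "lcm A B" p e] \<open>p \<noteq> Suc 0\<close> by simp
  moreover have "multiplicity p (lcm A B) = max (multiplicity p A) (multiplicity p B)"
    using assms by (simp add: multiplicity_lcm)
  ultimately show False by simp
qed

lemma Sg_coprime:
  fixes a b :: int and u :: nat
  assumes q: "quotient_of g = (a, b)" and a0: "a \<noteq> 0" and u: "u \<in> Sg g"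
  shows "coprime a (int u) \<and> coprime b (int u)"
proof -
  have b0: "b > 0" using quotient_of_denom_pos[OF q] .
  have ab: "coprime a b" using quotient_of_coprime[OF q] .
  have u0: "u > 0" and up: "\<And>p. prime p \<Longrightarrow> p dvd u \<Longrightarrow> padic_val_rat p g = 0"
    using u by (auto simp: Sg_def)
  have key: "\<not> p dvd a \<and> \<not> p dvd b" if p: "prime p" "p dvd int u" for p :: int
  proof -
    have pp: "p > 0" using p prime_gt_0_int by blast
    have ip: "int (nat p) = p" using pp by simp
    have "prime (nat p)" using p(1) prime_int_nat_transfer[of "nat p"] ip by simp
    moreover have "nat p dvd u" using p pp
    proof -
      have "int (nat p) dvd int u" using p(2) ip by simp
      thus ?thesis by (simp only: of_nat_dvd_iff)
    qed
    ultimately have "padic_val_rat (nat p) g = 0" using up by blast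
    hence m: "multiplicity p a = multiplicity p b"
      using q pp by (simp add: padic_val_rat_def)
    have nu: "\<not> is_unit p" using p by auto
    show ?thesis
    proof (rule ccontr)
      assume "\<not> ?thesis"
      then consider "p dvd a" | "p dvd b" by blast
      hence "p dvd a \<and> p dvd b"
      proof cases
        case 1
        hence "multiplicity p a \<ge> 1" using multiplicity_geI[of a p 1] a0 nu by simp
        hence "multiplicity p b \<ge> 1" using m by simp
        hence "p dvd b" using multiplicity_dvd'[of 1 p b] by simp
        with 1 show ?thesis by blast
      next
        case 2
        hence "multiplicity p b \<ge> 1" using multiplicity_geI[of b p 1] b0 nu by simp
        hence "multiplicity p a \<ge> 1" using m by simp
        hence "p dvd a" using multiplicity_dvd'[of 1 p a] by simp
        with 2 show ?thesis by blast
      qed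
      thus False using coprime_common_divisor[OF ab] nu by blast
    qed
  qed
  have "coprime a (int u)"
  proof (rule ccontr)
    assume "\<not> coprime a (int u)"
    hence "\<bar>gcd a (int u)\<bar> \<noteq> 1" by (simp add: coprime_iff_gcd_eq_1)
    then obtain p :: int where "prime p" "p dvd gcd a (int u)" by (rule prime_factor_int)
    thus False using key by auto
  qed
  moreover have "coprime b (int u)"
  proof (rule ccontr)
    assume "\<not> coprime b (int u)"
    hence "\<bar>gcd b (int u)\<bar> \<noteq> 1" by (simp add: coprime_iff_gcd_eq_1)
    then obtain p :: int where "prime p" "p dvd gcd b (int u)" by (rule prime_factor_int)
    thus False using key by auto
  qed
  ultimately show ?thesis by blast
qed

lemma ord_exists:
  fixes a b :: int and u :: nat
  assumes "coprime a (int u)" "coprime b (int u)" "u > 0"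
  shows "totient u > 0 \<and> [a ^ totient u = b ^ totient u] (mod int u)"
proof (cases "u = 1")
  case True thus ?thesis by simp
next
  case False
  hence r: "residues (int u)" using assms by (simp add: residues_def)
  have "[a ^ totient (nat (int u)) = 1] (mod int u)" "[b ^ totient (nat (int u)) = 1] (mod int u)"
    using residues.euler_theorem[OF r assms(1)] residues.euler_theorem[OF r assms(2)] by auto
  hence "[a ^ totient u = 1] (mod int u)" "[1 = b ^ totient u] (mod int u)"
    by (simp_all add: cong_sym)
  hence "[a ^ totient u = b ^ totient u] (mod int u)" by (rule cong_trans)
  thus ?thesis using assms by simp
qed

theorem lemma5:
  fixes g :: rat and m :: nat
  assumes "g \<notin> {-1, 0, 1}" and "m > 0"
  shows "\<forall>x y :: nat. x * y \<in> good_set g m \<longleftrightarrow> x \<in> good_set g m \<and> y \<in> good_set g m"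
proof (intro allI)
  fix x y :: nat
  obtain a b where q: "quotient_of g = (a, b)" by (cases "quotient_of g") auto
  have a0: "a \<noteq> 0"
  proof
    assume "a = 0"
    hence "g = 0" using quotient_of_div[OF q] by simp
    thus False using assms(1) by simp
  qed
  define Ord where "Ord u = (LEAST k. k > 0 \<and> [a ^ k = b ^ k] (mod int u))" for u
  have ordr: "ord_rat g u = Ord u" for u by (simp add: ord_rat_def q Ord_def)
  have OD: "Ord u > 0 \<and> [a ^ Ord u = b ^ Ord u] (mod int u) \<and>
      (\<forall>k. [a ^ k = b ^ k] (mod int u) \<longleftrightarrow> Ord u dvd k)" if uS: "u \<in> Sg g" for u
  proof -
    have c: "coprime a (int u)" "coprime b (int u)" using Sg_coprime[OF q a0 uS] by auto
    have u0: "u > 0" using uS by (simp add: Sg_def)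
    have e: "totient u > 0" "[a ^ totient u = b ^ totient u] (mod int u)"
      using ord_exists[OF c u0] by auto
    show ?thesis unfolding Ord_def using ordD[OF e c(2)] by blast
  qed
  have Sgm: "x * y \<in> Sg g \<longleftrightarrow> x \<in> Sg g \<and> y \<in> Sg g"
    unfolding Sg_def by (auto simp: prime_dvd_mult_iff)
  show "x * y \<in> good_set g m \<longleftrightarrow> x \<in> good_set g m \<and> y \<in> good_set g m"
  proof (cases "x \<in> Sg g \<and> y \<in> Sg g \<and> coprime x m \<and> coprime y m")
    case False
    then show ?thesis using Sgm by (auto simp: good_set_def)
  next
    case True
    hence xS: "x \<in> Sg g" and yS: "y \<in> Sg g" and cx: "coprime x m" and cy: "coprime y m"
      by auto
    have xyS: "x * y \<in> Sg g" using Sgm xS yS by simp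
    have cxy: "coprime (x * y) m" using cx cy by simp
    have Oxy: "[a ^ Ord (x * y) = b ^ Ord (x * y)] (mod int (x * y))" using OD[OF xyS] by blast
    have dx: "Ord x dvd Ord (x * y)"
    proof -
      have "[a ^ Ord (x * y) = b ^ Ord (x * y)] (mod int x)"
        using Oxy by (rule cong_dvd_modulus) simp
      thus ?thesis using OD[OF xS] by blast
    qed
    have dy: "Ord y dvd Ord (x * y)"
    proof -
      have "[a ^ Ord (x * y) = b ^ Ord (x * y)] (mod int y)"
        using Oxy by (rule cong_dvd_modulus) simp
      thus ?thesis using OD[OF yS] by blast
    qed
    define L where "L = lcm (Ord x) (Ord y)"
    have Lx: "[a ^ L = b ^ L] (mod int x)" using OD[OF xS] by (simp add: L_def)
    have Ly: "[a ^ L = b ^ L] (mod int y)" using OD[OF yS] by (simp add: L_def)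
    have "[a ^ L = b ^ L] (mod lcm (int x) (int y))"
      using Lx Ly unfolding cong_iff_dvd_diff by (rule lcm_least)
    moreover have "int (gcd x y) dvd lcm (int x) (int y)"
      by (simp add: dvd_trans[OF gcd_dvd1 dvd_lcm1])
    ultimately have "[(a ^ L) ^ gcd x y = (b ^ L) ^ gcd x y] (mod lcm (int x) (int y) * int (gcd x y))"
      by (rule pow_gcd_cong)
    moreover have "lcm (int x) (int y) * int (gcd x y) = int (x * y)"
    proof -
      have nn: "lcm x y * gcd x y = x * y" by simp
      have "int (lcm x y) * int (gcd x y) = int (x * y)"
        by (simp only: nn flip: of_nat_mult)
      moreover have "lcm (int x) (int y) = int (lcm x y)" by simp
      ultimately show ?thesis by simp
    qed
    ultimately have "[a ^ (L * gcd x y) = b ^ (L * gcd x y)] (mod int (x * y))"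
      by (simp add: power_mult)
    hence dL: "Ord (x * y) dvd L * gcd x y" using OD[OF xyS] by blast
    have Ox0: "Ord x > 0" using OD[OF xS] by blast
    have Oy0: "Ord y > 0" using OD[OF yS] by blast
    have main: "p ^ multiplicity p m dvd Ord (x * y) \<longleftrightarrow>
        p ^ multiplicity p m dvd Ord x \<or> p ^ multiplicity p m dvd Ord y"
      if p: "p \<in> prime_factors m" for p
    proof
      have pp: "prime p" "p dvd m" using p by auto
      have "\<not> p dvd gcd x y"
      proof
        assume "p dvd gcd x y"
        hence "p dvd x" by (meson dvd_trans gcd_dvd1)
        hence "is_unit p" using coprime_common_divisor[OF cx] pp(2) by blast
        thus False using pp(1) by auto
      qed
      hence cp: "coprime (p ^ multiplicity p m) (gcd x y)"
        using prime_imp_power_coprime[OF pp(1), of "gcd x y" "multiplicity p m"] coprime_commute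
        by blast
      assume "p ^ multiplicity p m dvd Ord (x * y)"
      hence "p ^ multiplicity p m dvd L * gcd x y" using dL by (rule dvd_trans)
      hence "p ^ multiplicity p m dvd L" using cp coprime_dvd_mult_left_iff by blast
      thus "p ^ multiplicity p m dvd Ord x \<or> p ^ multiplicity p m dvd Ord y"
        using lcm_pp[OF pp(1) Ox0 Oy0] by (simp add: L_def)
    next
      assume "p ^ multiplicity p m dvd Ord x \<or> p ^ multiplicity p m dvd Ord y"
      thus "p ^ multiplicity p m dvd Ord (x * y)" using dx dy dvd_trans by blast
    qed
    show ?thesis using True xyS cxy main by (auto simp: good_set_def ordr)
  qed
qed

end
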